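(* Let $\Lambda\in\mathbb{R}$ and let $\rho,p,q$ be smooth real functions of a real variable $z$, defined on an open interval containing $z=0$, and write $\rho_0=\rho(0)$, $p_0=p(0)$, $q_0=q(0)$. Consider the energy-momentum tensor $(T^{\mu}_{\nu})=\mathrm{diag}\{\rho(z),-p(z),-p(z),-q(z)\}$ in coordinates $(t,x,y,z)$. Assume it is generic at $z=0$, i.e. \[ q_0\neq\Lambda \quad\text{and}\quad \big[\ \rho_0\neq q_0-2\Lambda \ \text{ or } \ \rho_0+4p_0+3q_0\neq 6\Lambda\ \big], \] and fix a constant $z_S$ with \[ \frac{q_0-\Lambda}{z_S}<0 \qquad\text{and}\qquad 3z_S(\rho_0-q_0+2\Lambda)\neq \rho_0+4p_0+3q_0-6\Lambda . \] Then there is a maximal open interval $I_0$ containing $z=0$ on which the function \[ \Phi(z)=\frac{q(z)-\Lambda}{z-z_S}\cdot\frac{1}{3(z-z_S)\big(\rho(z)-q(z)+2\Lambda\big)+\rho(z)+4p(z)+3q(z)-6\Lambda} \] is well defined and $\dfrac{q(z)-\Lambda}{z-z_S}>0$. Furthermore, the metric \[ g=e^{2\int_0^z \left(3(z'-z_S)-1\right)\Phi(z')\,dz'}\,dt^2-e^{4\int_0^z\Phi(z')\,dz'}\,(dx^2+dy^2)-\frac{12\,(z-z_S)}{q(z)-\Lambda}\,\Phi(z)^2\,dz^2, \] defined for $z\in I_0$, satisfies Einstein's equations with cosmological constant $\Lambda$, \[ R^{\mu}_{\nu}-\tfrac12 R\,\delta^{\mu}_{\nu}-\Lambda\,\delta^{\mu}_{\nu}=T^{\mu}_{\nu},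 \] provided the energy-momentum tensor is conserved, $\nabla_\mu T^{\mu}_{\nu}=0$, which (for this metric) is equivalent to \[ \frac{dq}{dz}=\Big[\big(1-3(z-z_S)\big)(\rho+q)+4(p-q)\Big]\Phi . \]
   Context: Units are chosen so that $8\pi G/c^4=1$. The metric has signature $(+,-,-,-)$. The Levi-Civita connection $\Gamma$ of $g$ is used, with Riemann tensor $R^{\lambda}{}_{\mu\kappa\nu}=\partial_\kappa\Gamma^\lambda_{\nu\mu}-\partial_\nu\Gamma^\lambda_{\kappa\mu}+\Gamma^\lambda_{\kappa\sigma}\Gamma^\sigma_{\nu\mu}-\Gamma^\lambda_{\nu\sigma}\Gamma^\sigma_{\kappa\mu}$, Ricci tensor $R_{\mu\nu}=R^{\lambda}{}_{\mu\lambda\nu}$, $R^\mu_\nu=g^{\mu\alpha}R_{\alpha\nu}$, and scalar curvature $R=R^\mu_\mu$. $\nabla$ denotes the covariant derivative of $g$. *)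

theory Defs
  imports "HOL-Analysis.Analysis"
begin

text \<open>Points of spacetime are coordinate tuples \<open>nat \<Rightarrow> real\<close>, of which only the
  components 0,1,2,3 = t,x,y,z are used. Tensor components are indexed by naturals below 4.\<close>

type_synonym point = "nat \<Rightarrow> real"
type_synonym field2 = "point \<Rightarrow> nat \<Rightarrow> nat \<Rightarrow> real"

definition smooth_on :: "real set \<Rightarrow> (real \<Rightarrow> real) \<Rightarrow> bool" where
  "smooth_on J f \<longleftrightarrow> (\<forall>n. \<forall>z\<in>J. ((deriv ^^ n) f) differentiable (at z))"

definition ointegral :: "real \<Rightarrow> real \<Rightarrow> (real \<Rightarrow> real) \<Rightarrow> real" where
  "ointegral a b f = (if a \<le> b then integral {a..b} f else - integral {b..a} f)"

definition kdelta :: "nat \<Rightarrow> nat \<Rightarrow> real" where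
  "kdelta i j = (if i = j then 1 else 0)"

definition partial :: "nat \<Rightarrow> (point \<Rightarrow> real) \<Rightarrow> point \<Rightarrow> real" where
  "partial k f x = deriv (\<lambda>s. f (x(k := s))) (x k)"

definition inv_metric :: "field2 \<Rightarrow> field2" where
  "inv_metric g x = (THE h. (\<forall>i<4. \<forall>j<4. (\<Sum>k<4. g x i k * h k j) = kdelta i j)
                         \<and> (\<forall>i j. \<not> (i < 4 \<and> j < 4) \<longrightarrow> h i j = 0))"

definition christoffel :: "field2 \<Rightarrow> nat \<Rightarrow> nat \<Rightarrow> nat \<Rightarrow> point \<Rightarrow> real" where
  "christoffel g l m n x = 1/2 * (\<Sum>s<4. inv_metric g x l s *
      (partial m (\<lambda>y. g y s n) x + partial n (\<lambda>y. g y s m) x - partial s (\<lambda>y. g y m n) x))"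

text \<open>riemann g l m k n x = R^l_{m k n}(x), with the convention of the paper.\<close>
definition riemann :: "field2 \<Rightarrow> nat \<Rightarrow> nat \<Rightarrow> nat \<Rightarrow> nat \<Rightarrow> point \<Rightarrow> real" where
  "riemann g l m k n x =
     partial k (christoffel g l n m) x - partial n (christoffel g l k m) x
     + (\<Sum>s<4. christoffel g l k s x * christoffel g s n m x
              - christoffel g l n s x * christoffel g s k m x)"

definition ricci :: "field2 \<Rightarrow> nat \<Rightarrow> nat \<Rightarrow> point \<Rightarrow> real" where
  "ricci g m n x = (\<Sum>l<4. riemann g l m l n x)"

definition ricci_mixed :: "field2 \<Rightarrow> nat \<Rightarrow> nat \<Rightarrow> point \<Rightarrow> real" where
  "ricci_mixed g m n x = (\<Sum>a<4. inv_metric g x m a * ricci g a n x)"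

definition scalar_curv :: "field2 \<Rightarrow> point \<Rightarrow> real" where
  "scalar_curv g x = (\<Sum>m<4. ricci_mixed g m m x)"

definition einstein_lhs :: "field2 \<Rightarrow> real \<Rightarrow> nat \<Rightarrow> nat \<Rightarrow> point \<Rightarrow> real" where
  "einstein_lhs g \<Lambda> m n x =
     ricci_mixed g m n x - 1/2 * scalar_curv g x * kdelta m n - \<Lambda> * kdelta m n"

text \<open>Covariant divergence nabla_m T^m_n of a (1,1)-tensor field T (T y m n = T^m_n(y)).\<close>
definition cov_div :: "field2 \<Rightarrow> field2 \<Rightarrow> nat \<Rightarrow> point \<Rightarrow> real" where
  "cov_div g T n x = (\<Sum>m<4. partial m (\<lambda>y. T y m n) x)
     + (\<Sum>m<4. \<Sum>s<4. christoffel g m m s x * T x s n - christoffel g s m n x * T x m s)"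

definition Phi :: "real \<Rightarrow> (real \<Rightarrow> real) \<Rightarrow> (real \<Rightarrow> real) \<Rightarrow> (real \<Rightarrow> real) \<Rightarrow> real \<Rightarrow> real \<Rightarrow> real" where
  "Phi \<Lambda> \<rho> p q zS z = (q z - \<Lambda>) / (z - zS) *
     (1 / (3 * (z - zS) * (\<rho> z - q z + 2 * \<Lambda>) + \<rho> z + 4 * p z + 3 * q z - 6 * \<Lambda>))"

definition good_pt :: "real set \<Rightarrow> real \<Rightarrow> (real \<Rightarrow> real) \<Rightarrow> (real \<Rightarrow> real) \<Rightarrow> (real \<Rightarrow> real) \<Rightarrow> real \<Rightarrow> real \<Rightarrow> bool" where
  "good_pt J \<Lambda> \<rho> p q zS z \<longleftrightarrow> z \<in> J \<and> z \<noteq> zS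
     \<and> 3 * (z - zS) * (\<rho> z - q z + 2 * \<Lambda>) + \<rho> z + 4 * p z + 3 * q z - 6 * \<Lambda> \<noteq> 0
     \<and> (q z - \<Lambda>) / (z - zS) > 0"

definition metric :: "real \<Rightarrow> (real \<Rightarrow> real) \<Rightarrow> (real \<Rightarrow> real) \<Rightarrow> (real \<Rightarrow> real) \<Rightarrow> real \<Rightarrow> field2" where
  "metric \<Lambda> \<rho> p q zS x m n =
     (let z = x 3; \<Phi> = Phi \<Lambda> \<rho> p q zS in
      if m = 0 \<and> n = 0 then exp (2 * ointegral 0 z (\<lambda>z'. (3 * (z' - zS) - 1) * \<Phi> z'))
      else if (m = 1 \<and> n = 1) \<or> (m = 2 \<and> n = 2) then - exp (4 * ointegral 0 z \<Phi>)
      else if m = 3 \<and> n = 3 then - (12 * (z - zS) / (q z - \<Lambda>)) * (\<Phi> z)\<^sup>2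
      else 0)"

definition emt :: "(real \<Rightarrow> real) \<Rightarrow> (real \<Rightarrow> real) \<Rightarrow> (real \<Rightarrow> real) \<Rightarrow> field2" where
  "emt \<rho> p q x m n =
     (let z = x 3 in
      if m = 0 \<and> n = 0 then \<rho> z
      else if (m = 1 \<and> n = 1) \<or> (m = 2 \<and> n = 2) then - p z
      else if m = 3 \<and> n = 3 then - q z
      else 0)"

end

theory Submission
  imports Defs
begin


lemma sum4: "(\<Sum>i<(4::nat). f i) = f 0 + f 1 + f 2 + f 3"
  by (simp add: numeral_eq_Suc)
lemma all4: "(\<forall>i<(4::nat). P i) \<longleftrightarrow> P 0 \<and> P 1 \<and> P 2 \<and> P 3"
  by (auto simp: numeral_eq_Suc less_Suc_eq)

definition comp3 :: "(real\<Rightarrow>real)\<Rightarrow>(real\<Rightarrow>real)\<Rightarrow>(real\<Rightarrow>real)\<Rightarrow>nat\<Rightarrow>nat\<Rightarrow>real\<Rightarrow>real" where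
  "comp3 a b c m n = (if m=0\<and>n=0 then a else if (m=1\<and>n=1)\<or>(m=2\<and>n=2) then b else if m=3\<and>n=3 then c else (\<lambda>_. 0))"

definition dmet :: "(real\<Rightarrow>real)\<Rightarrow>(real\<Rightarrow>real)\<Rightarrow>(real\<Rightarrow>real)\<Rightarrow>field2" where
  "dmet a b c x m n = comp3 a b c m n (x 3)"

definition dinv :: "(real\<Rightarrow>real)\<Rightarrow>(real\<Rightarrow>real)\<Rightarrow>(real\<Rightarrow>real)\<Rightarrow>real\<Rightarrow>nat\<Rightarrow>nat\<Rightarrow>real" where
  "dinv a b c z i j = (if i=j then (if i=0 then 1/a z else if i=1\<or>i=2 then 1/b z else if i=3 then 1/c z else 0) else 0)"

lemma inv_dmet:
  assumes "a (x 3) \<noteq> 0" "b (x 3) \<noteq> 0" "c (x 3) \<noteq> 0"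
  shows "inv_metric (dmet a b c) x = dinv a b c (x 3)"
  unfolding inv_metric_def
proof (rule the_equality)
  show "(\<forall>i<4. \<forall>j<4. (\<Sum>k<4. dmet a b c x i k * dinv a b c (x 3) k j) = kdelta i j) \<and>
    (\<forall>i j. \<not> (i < 4 \<and> j < 4) \<longrightarrow> dinv a b c (x 3) i j = 0)"
    using assms by (auto simp: all4 sum4 dmet_def comp3_def dinv_def kdelta_def)
next
  fix h assume H: "(\<forall>i<4. \<forall>j<4. (\<Sum>k<4. dmet a b c x i k * h k j) = kdelta i j) \<and>
    (\<forall>i j. \<not> (i < 4 \<and> j < 4) \<longrightarrow> h i j = 0)"
  show "h = dinv a b c (x 3)"
  proof (intro ext)
    fix i j
    show "h i j = dinv a b c (x 3) i j"
    proof (cases "i < 4 \<and> j < 4")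
      case True
      then have "i=0\<or>i=1\<or>i=2\<or>i=3" "j=0\<or>j=1\<or>j=2\<or>j=3" by auto
      then show ?thesis using H assms
        by (auto simp: all4 sum4 dmet_def comp3_def dinv_def kdelta_def field_simps)
    next
      case False then show ?thesis using H by (auto simp: dinv_def)
    qed
  qed
qed

lemma partial_y3: "partial k (\<lambda>y. f (y 3)) x = (if k = 3 then deriv f (x 3) else 0)"
  by (auto simp: partial_def)

lemma deriv_comp3: "deriv (comp3 a b c m n) = (if m=0\<and>n=0 then deriv a else if (m=1\<and>n=1)\<or>(m=2\<and>n=2) then deriv b else if m=3\<and>n=3 then deriv c else (\<lambda>_. 0))"
  by (auto simp: comp3_def)

definition Gam :: "(real\<Rightarrow>real)\<Rightarrow>(real\<Rightarrow>real)\<Rightarrow>(real\<Rightarrow>real)\<Rightarrow>nat\<Rightarrow>nat\<Rightarrow>nat\<Rightarrow>real\<Rightarrow>real" where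
 "Gam a b c l m n = (\<lambda>z. if l=0 \<and> ((m=0\<and>n=3)\<or>(m=3\<and>n=0)) then deriv a z/(2*a z)
   else if (l=1\<and>((m=1\<and>n=3)\<or>(m=3\<and>n=1)))\<or>(l=2\<and>((m=2\<and>n=3)\<or>(m=3\<and>n=2))) then deriv b z/(2*b z)
   else if l=3\<and>m=3\<and>n=3 then deriv c z/(2*c z)
   else if l=3\<and>m=0\<and>n=0 then -deriv a z/(2*c z)
   else if l=3\<and>((m=1\<and>n=1)\<or>(m=2\<and>n=2)) then -deriv b z/(2*c z) else 0)"

lemma chr_dmet:
  assumes "a (x 3) \<noteq> 0" "b (x 3) \<noteq> 0" "c (x 3) \<noteq> 0"
  shows "christoffel (dmet a b c) l m n x = Gam a b c l m n (x 3)"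
proof -
  have l: "l=0\<or>l=1\<or>l=2\<or>l=3\<or>l\<ge>4" and m: "m=0\<or>m=1\<or>m=2\<or>m=3\<or>m\<ge>4"
   and n: "n=0\<or>n=1\<or>n=2\<or>n=3\<or>n\<ge>4" by auto
  show ?thesis
    unfolding christoffel_def inv_dmet[of a x b c, OF assms] dmet_def partial_y3 deriv_comp3 sum4
    using l m n by (auto simp: dinv_def Gam_def comp3_def)
qed

lemma partial_chr:
  assumes U: "open U" "x 3 \<in> U" "\<And>z. z \<in> U \<Longrightarrow> a z \<noteq> 0 \<and> b z \<noteq> 0 \<and> c z \<noteq> 0"
  shows "partial k (christoffel (dmet a b c) l n m) x = (if k=3 then deriv (Gam a b c l n m) (x 3) else 0)"
proof (cases "k = 3")
  case True
  have "eventually (\<lambda>s. christoffel (dmet a b c) l n m (x(3:=s)) = Gam a b c l n m s) (nhds (x 3))"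
  proof (rule eventually_nhds_in_open[OF U(1,2), THEN eventually_mono])
    fix s assume "s \<in> U"
    then show "christoffel (dmet a b c) l n m (x(3:=s)) = Gam a b c l n m s"
      using U(3)[of s] chr_dmet[of a "x(3:=s)" b c] by simp
  qed
  then show ?thesis using True unfolding partial_def by (auto intro!: deriv_cong_ev)
next
  case False
  then have "christoffel (dmet a b c) l n m (x(k:=s)) = Gam a b c l n m (x 3)" for s
    using U by (subst chr_dmet) auto
  then show ?thesis using False unfolding partial_def by simp
qed

definition "R00 a b c z = deriv (\<lambda>z. - (deriv a z / (2 * c z))) z
   + (2*(deriv b z/(2*b z)) + deriv c z/(2*c z) - deriv a z/(2*a z)) * (- (deriv a z / (2 * c z)))"
definition "R11 a b c z = deriv (\<lambda>z. - (deriv b z / (2 * c z))) z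
   + (deriv a z/(2*a z) + deriv c z/(2*c z)) * (- (deriv b z / (2 * c z)))"
definition "R33 a b c z = - (deriv (\<lambda>z. deriv a z/(2*a z)) z + 2 * deriv (\<lambda>z. deriv b z/(2*b z)) z)
   + (deriv a z/(2*a z) + 2 * (deriv b z/(2*b z))) * (deriv c z/(2*c z)) - (deriv a z/(2*a z))^2 - 2*(deriv b z/(2*b z))^2"

lemma ricci_dmet:
  assumes U: "open U" "x 3 \<in> U" "\<And>z. z \<in> U \<Longrightarrow> a z \<noteq> 0 \<and> b z \<noteq> 0 \<and> c z \<noteq> 0"
    and mn: "m < 4" "n < 4"
  shows "ricci (dmet a b c) m n x = (if m = n then (if m = 0 then R00 a b c (x 3) else if m = 3 then R33 a b c (x 3) else R11 a b c (x 3)) else 0)"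
proof -
  have nz: "a (x 3) \<noteq> 0" "b (x 3) \<noteq> 0" "c (x 3) \<noteq> 0" using U by auto
  have P: "\<And>k l n m. partial k (christoffel (dmet a b c) l n m) x = (if k=3 then deriv (Gam a b c l n m) (x 3) else 0)"
    by (rule partial_chr[where U=U and x=x and a=a and b=b and c=c, OF U])
  have "m=0\<or>m=1\<or>m=2\<or>m=3" "n=0\<or>n=1\<or>n=2\<or>n=3" using mn by auto
  then show ?thesis
  unfolding ricci_def riemann_def P chr_dmet[of a x b c, OF nz] sum4
  using nz by (auto simp add: Gam_def R00_def R11_def R33_def field_simps power2_eq_square)
qed

definition "Scal a b c z = R00 a b c z / a z + 2 * (R11 a b c z / b z) + R33 a b c z / c z"

lemma ricci_mixed_dmet:
  assumes U: "open U" "x 3 \<in> U" "\<And>z. z \<in> U \<Longrightarrow> a z \<noteq> 0 \<and> b z \<noteq> 0 \<and> c z \<noteq> 0"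
    and mn: "m < 4" "n < 4"
  shows "ricci_mixed (dmet a b c) m n x = (if m = n then (if m = 0 then R00 a b c (x 3) / a (x 3) else if m = 3 then R33 a b c (x 3) / c (x 3) else R11 a b c (x 3) / b (x 3)) else 0)"
proof -
  have nz: "a (x 3) \<noteq> 0" "b (x 3) \<noteq> 0" "c (x 3) \<noteq> 0" using U by auto
  have "m=0\<or>m=1\<or>m=2\<or>m=3" "n=0\<or>n=1\<or>n=2\<or>n=3" using mn by auto
  then show ?thesis
    unfolding ricci_mixed_def inv_dmet[of a x b c, OF nz] sum4
    by (auto simp: dinv_def ricci_dmet[where U=U and x=x and a=a and b=b and c=c, OF U])
qed

lemma scal_dmet:
  assumes U: "open U" "x 3 \<in> U" "\<And>z. z \<in> U \<Longrightarrow> a z \<noteq> 0 \<and> b z \<noteq> 0 \<and> c z \<noteq> 0"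
  shows "scalar_curv (dmet a b c) x = Scal a b c (x 3)"
  unfolding scalar_curv_def sum4 by (simp add: ricci_mixed_dmet[where U=U and x=x and a=a and b=b and c=c, OF U] Scal_def)

lemma ein_dmet:
  assumes U: "open U" "x 3 \<in> U" "\<And>z. z \<in> U \<Longrightarrow> a z \<noteq> 0 \<and> b z \<noteq> 0 \<and> c z \<noteq> 0"
    and mn: "m < 4" "n < 4"
  shows "einstein_lhs (dmet a b c) \<Lambda> m n x = (if m = n then (if m = 0 then R00 a b c (x 3) / a (x 3) else if m = 3 then R33 a b c (x 3) / c (x 3) else R11 a b c (x 3) / b (x 3)) - Scal a b c (x 3) / 2 - \<Lambda> else 0)"
  unfolding einstein_lhs_def using mn
  by (simp add: ricci_mixed_dmet[where U=U and x=x and a=a and b=b and c=c, OF U] scal_dmet[where U=U and x=x and a=a and b=b and c=c, OF U] kdelta_def)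

lemma emt_dmet: "emt \<rho> p q = dmet \<rho> (\<lambda>z. - p z) (\<lambda>z. - q z)"
  by (auto simp: fun_eq_iff emt_def dmet_def comp3_def Let_def)

lemma cov_dmet:
  assumes nz: "a (x 3) \<noteq> 0" "b (x 3) \<noteq> 0" "c (x 3) \<noteq> 0" and n: "n < 4"
  shows "cov_div (dmet a b c) (dmet t0 t1 t3) n x = (if n = 3 then deriv t3 (x 3)
     + deriv a (x 3)/(2*a (x 3)) * (t3 (x 3) - t0 (x 3)) + 2 * (deriv b (x 3)/(2*b (x 3))) * (t3 (x 3) - t1 (x 3)) else 0)"
proof -
  have "n=0\<or>n=1\<or>n=2\<or>n=3" using n by auto
  then show ?thesis
    unfolding cov_div_def chr_dmet[of a x b c, OF nz] sum4
    using nz by (auto simp add: dmet_def partial_y3 deriv_comp3 Gam_def comp3_def field_simps)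
qed



lemma alg:
  fixes u P P' Q' K \<rho> p q \<Lambda> a b C C' fA fA' D :: real
  assumes u: "u \<noteq> 0" and K: "K = q - \<Lambda>" "K \<noteq> 0" and D: "D = 3*u*(\<rho> - q + 2*\<Lambda>) + \<rho> + 4*p + 3*q - 6*\<Lambda>" "D \<noteq> 0"
    and P: "P = K / u * (1 / D)" and Q': "Q' = ((1 - 3*u)*(\<rho> + q) + 4*(p - q)) * P"
    and fA: "fA = (3*u - 1)*P" "fA' = 3*P + (3*u-1)*P'"
    and C: "C = -(12*u/K)*P^2" "C' = -12*(P^2/K + 2*u*P*P'/K - u*P^2*Q'/K^2)"
    and a: "a \<noteq> 0" and b: "b \<noteq> 0"
  defines "\<alpha> \<equiv> fA" and "\<beta> \<equiv> 2*P" and "\<gamma> \<equiv> C'/(2*C)"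
    and "F \<equiv> -(fA*a/C)" and "dF \<equiv> -((fA'*a + fA*(2*fA*a))/C - fA*a*C'/C^2)"
    and "H \<equiv> -(2*P*b/C)" and "dH \<equiv> -((2*P'*b + 2*P*(4*P*b))/C - 2*P*b*C'/C^2)"
  defines "X00 \<equiv> dF + (2*\<beta> + \<gamma> - \<alpha>)*F" and "X11 \<equiv> dH + (\<alpha>+\<gamma>)*H"
    and "X33 \<equiv> -(fA' + 2*(2*P')) + (\<alpha>+2*\<beta>)*\<gamma> - \<alpha>^2 - 2*\<beta>^2"
  defines "S \<equiv> X00/a + 2*(X11/b) + X33/C"
  shows "X00/a - S/2 - \<Lambda> = \<rho>" "X11/b - S/2 - \<Lambda> = -p" "X33/C - S/2 - \<Lambda> = -q"
proof -
  have P0: "P \<noteq> 0" using P u K D by simp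
  have C0: "C \<noteq> 0" using C P0 u K by simp
  have KK: "K = P*u*D" using P u D(2) by (simp add: field_simps)
  have C'g: "C' = 2*C*\<gamma>" using C0 by (simp add: \<gamma>_def)
  have g: "\<gamma> = 1/(2*u) - Q'/(2*K) + P'/P"
    unfolding \<gamma>_def C using u K P0 by (simp add: field_simps power2_eq_square)
  have r0: "X00/a = -(fA' + fA^2 + 2*fA*(2*P) - fA*\<gamma>)/C"
    unfolding X00_def dF_def F_def \<alpha>_def \<beta>_def C'g using a C0 by (simp add: field_simps power2_eq_square)
  have r1: "X11/b = -(2*P' + 2*(2*P)^2 + fA*(2*P) - (2*P)*\<gamma>)/C"
    unfolding X11_def dH_def H_def \<alpha>_def \<beta>_def C'g using b C0 by (simp add: field_simps power2_eq_square)
  have r3: "X33 = -(fA' + 2*(2*P')) + (fA+2*(2*P))*\<gamma> - fA^2 - 2*(2*P)^2"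
    unfolding X33_def \<alpha>_def \<beta>_def by simp
  have e0: "X00/a - S/2 - \<Lambda> = (4*P' + 12*P^2 - 4*P*\<gamma>)/C - \<Lambda>"
    unfolding S_def r0 r1 r3 using C0 by (simp add: field_simps power2_eq_square)
  also have "\<dots> = (12*P^2 - 2*P/u + 2*P*Q'/K)/C - \<Lambda>"
    unfolding g using P0 u K C0 by (simp add: field_simps power2_eq_square)
  also have "\<dots> = -K/u + K/(6*u^2*P) - Q'/(6*u*P) - \<Lambda>"
    unfolding C using P0 u K by (simp add: field_simps power2_eq_square)
  also have "\<dots> = -K/u + (D - ((1 - 3*u)*(\<rho> + q) + 4*(p - q)))/(6*u) - \<Lambda>"
  proof -
    have "K/(6*u^2*P) = D/(6*u)" using KK P0 u by (simp add: field_simps power2_eq_square)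
    moreover have "Q'/(6*u*P) = ((1 - 3*u)*(\<rho> + q) + 4*(p - q))/(6*u)" using Q' P0 u by (simp add: field_simps)
    ultimately show ?thesis by (simp add: diff_divide_distrib)
  qed
  also have "\<dots> = \<rho>"
    unfolding D(1) K(1) using u by (simp add: field_simps)
  finally show "X00/a - S/2 - \<Lambda> = \<rho>" .
  have "X11/b - S/2 - \<Lambda> = (fA' + fA^2 + fA*(2*P) - fA*\<gamma> + 2*P' - 2*P*\<gamma> + 4*P^2)/C - \<Lambda>"
    unfolding S_def r0 r1 r3 using C0 by (simp add: field_simps power2_eq_square)
  also have "\<dots> = (P^2*(9*u^2+3) + 3*P - (3*u+1)*P/(2*u) + (3*u+1)*P*Q'/(2*K))/C - \<Lambda>"
    unfolding g fA using P0 u K C0 by (simp add: field_simps power2_eq_square)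
  also have "\<dots> = -K*(9*u^2+3)/(12*u) - (K/P)*(3 - (3*u+1)/(2*u))/(12*u) - (3*u+1)*(Q'/P)/(24*u) - \<Lambda>"
    unfolding C using P0 u K by (simp add: field_simps power2_eq_square)
  also have "\<dots> = -K*(9*u^2+3)/(12*u) - (u*D)*(3 - (3*u+1)/(2*u))/(12*u) - (3*u+1)*((1 - 3*u)*(\<rho> + q) + 4*(p - q))/(24*u) - \<Lambda>"
  proof -
    have "K/P = u*D" using KK P0 by (simp add: field_simps)
    moreover have "Q'/P = ((1 - 3*u)*(\<rho> + q) + 4*(p - q))" using Q' P0 by (simp add: field_simps)
    ultimately show ?thesis by simp
  qed
  also have "\<dots> = -p"
    unfolding D(1) K(1) using u by (simp add: field_simps power2_eq_square)
  finally show "X11/b - S/2 - \<Lambda> = -p" .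
  have "X33/C - S/2 - \<Lambda> = ((2*P)^2 + 2*fA*(2*P))/C - \<Lambda>"
    unfolding S_def r0 r1 r3 using C0 by (simp add: field_simps power2_eq_square)
  also have "\<dots> = -q"
    unfolding C fA K(1) using P0 u K by (simp add: field_simps power2_eq_square)
  finally show "X33/C - S/2 - \<Lambda> = -q" .
qed


lemma ftc:
  assumes I: "open I" "is_interval I" "0 \<in> I" "z \<in> I" and f: "continuous_on I f"
  shows "((\<lambda>s. ointegral 0 s f) has_real_derivative f z) (at z)"
proof -
  obtain e0 where e0: "e0 > 0" "ball 0 e0 \<subseteq> I" using I(1,3) openE by blast
  obtain e where e: "e > 0" "ball z e \<subseteq> I" using I(1,4) openE by blast
  define lo where "lo = min (-e0/2) (z - e/2)"
  define hi where "hi = max (e0/2) (z + e/2)"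
  have 1: "-e0/2 \<in> I" "e0/2 \<in> I" using e0 by (auto intro!: e0(2)[THEN subsetD] simp: dist_real_def)
  have 2: "z-e/2 \<in> I" "z+e/2 \<in> I" using e by (auto intro!: e(2)[THEN subsetD] simp: dist_real_def)
  have loI: "lo \<in> I" unfolding lo_def using 1 2 by (simp add: min_def)
  have hiI: "hi \<in> I" unfolding hi_def using 1 2 by (simp add: max_def)
  have sub: "{lo..hi} \<subseteq> I" using mem_is_interval_1_I[OF I(2) loI hiI] by auto
  have cf: "continuous_on {lo..hi} f" using continuous_on_subset[OF f sub] .
  have z: "z \<in> {lo<..<hi}" "0 \<in> {lo<..<hi}" unfolding lo_def hi_def using e e0 by auto
  have int: "f integrable_on {u..v}" if "lo \<le> u" "v \<le> hi" for u v
    by (rule integrable_continuous_interval) (use cf that in \<open>auto intro: continuous_on_subset\<close>)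
  have eq: "ointegral 0 s f = integral {lo..s} f - integral {lo..0} f" if "s \<in> {lo<..<hi}" for s
  proof (cases "0 \<le> s")
    case True
    have "integral {lo..0} f + integral {0..s} f = integral {lo..s} f"
      by (rule Henstock_Kurzweil_Integration.integral_combine) (use that z True in \<open>auto simp: less_imp_le intro!: int\<close>)
    then show ?thesis using True by (simp add: ointegral_def)
  next
    case False
    have "integral {lo..s} f + integral {s..0} f = integral {lo..0} f"
      by (rule Henstock_Kurzweil_Integration.integral_combine) (use that z False in \<open>auto simp: less_imp_le intro!: int\<close>)
    then show ?thesis using False by (simp add: ointegral_def)
  qed
  have "((\<lambda>s. integral {lo..s} f) has_real_derivative f z) (at z within {lo..hi})"
    using z by (intro integral_has_real_derivative cf) auto
  then have "((\<lambda>s. integral {lo..s} f) has_real_derivative f z) (at z)"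
    using z by (subst (asm) at_within_interior) (auto simp: interior_atLeastAtMost_real)
  then have "((\<lambda>s. integral {lo..s} f - integral {lo..0} f) has_real_derivative f z - 0) (at z)"
    by (intro DERIV_diff DERIV_const)
  then have "((\<lambda>s. integral {lo..s} f - integral {lo..0} f) has_real_derivative f z) (at z)" by simp
  then show ?thesis
    by (rule has_field_derivative_transform_within_open[where S="{lo<..<hi}"]) (use z eq in auto)
qed



lemma deriv_local:
  assumes "open U" "z \<in> U" "\<And>w. w \<in> U \<Longrightarrow> f w = g w" "(g has_real_derivative D) (at z)"
  shows "deriv f z = D"
proof (rule DERIV_imp_deriv)
  show "(f has_real_derivative D) (at z)"
    by (rule has_field_derivative_transform_within_open[OF assms(4) assms(1,2)]) (use assms(3) in auto)
qed

lemma Dc_gen: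
  fixes k f :: "real \<Rightarrow> real"
  assumes "k z \<noteq> 0" "(k has_real_derivative k') (at z)" "(f has_real_derivative f') (at z)"
  shows "((\<lambda>z. - (12 * (z - zS) / k z) * (f z)\<^sup>2) has_real_derivative
     -12*((f z)^2/k z + 2*(z - zS)*f z*f'/k z - (z - zS)*(f z)^2*k'/(k z)^2)) (at z)"
  using assms by (auto intro!: derivative_eq_intros simp: field_simps power2_eq_square)

lemma DF_gen:
  fixes f a c :: "real \<Rightarrow> real"
  assumes "c z \<noteq> 0" "(f has_real_derivative f') (at z)" "(a has_real_derivative a') (at z)" "(c has_real_derivative c') (at z)"
  shows "((\<lambda>w. - (f w * a w / c w)) has_real_derivative - ((f' * a z + f z * a') / c z - f z * a z * c' / (c z)^2)) (at z)"
  using assms by (auto intro!: derivative_eq_intros simp: field_simps power2_eq_square)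

theorem theorem1:
  fixes \<Lambda> zS :: real and \<rho> p q :: "real \<Rightarrow> real" and J :: "real set"
  assumes J: "open J" "is_interval J" "0 \<in> J"
    and smooth: "smooth_on J \<rho>" "smooth_on J p" "smooth_on J q"
    and generic: "q 0 \<noteq> \<Lambda>"
      "\<rho> 0 \<noteq> q 0 - 2 * \<Lambda> \<or> \<rho> 0 + 4 * p 0 + 3 * q 0 \<noteq> 6 * \<Lambda>"
    and zS: "(q 0 - \<Lambda>) / zS < 0"
      "3 * zS * (\<rho> 0 - q 0 + 2 * \<Lambda>) \<noteq> \<rho> 0 + 4 * p 0 + 3 * q 0 - 6 * \<Lambda>"
  shows "\<exists>I0. open I0 \<and> is_interval I0 \<and> 0 \<in> I0
     \<and> (\<forall>z\<in>I0. good_pt J \<Lambda> \<rho> p q zS z)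
     \<and> (\<forall>I. open I \<and> is_interval I \<and> 0 \<in> I \<and> (\<forall>z\<in>I. good_pt J \<Lambda> \<rho> p q zS z) \<longrightarrow> I \<subseteq> I0)
     \<and> (\<forall>x. x 3 \<in> I0 \<longrightarrow>
          ((\<forall>n<4. cov_div (metric \<Lambda> \<rho> p q zS) (emt \<rho> p q) n x = 0)
           \<longleftrightarrow> deriv q (x 3) = ((1 - 3 * (x 3 - zS)) * (\<rho> (x 3) + q (x 3)) + 4 * (p (x 3) - q (x 3)))
                                 * Phi \<Lambda> \<rho> p q zS (x 3)))
     \<and> ((\<forall>x. x 3 \<in> I0 \<longrightarrow> (\<forall>n<4. cov_div (metric \<Lambda> \<rho> p q zS) (emt \<rho> p q) n x = 0))
        \<longrightarrow> (\<forall>x. x 3 \<in> I0 \<longrightarrow> (\<forall>m<4. \<forall>n<4.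
              einstein_lhs (metric \<Lambda> \<rho> p q zS) \<Lambda> m n x = emt \<rho> p q x m n)))"
proof -
  define \<Phi> where "\<Phi> = Phi \<Lambda> \<rho> p q zS"
  define Dn where "Dn = (\<lambda>z. 3 * (z - zS) * (\<rho> z - q z + 2 * \<Lambda>) + \<rho> z + 4 * p z + 3 * q z - 6 * \<Lambda>)"
  define S where "S = {z. good_pt J \<Lambda> \<rho> p q zS z}"
  have dif: "f differentiable (at z)" if "smooth_on J f" "z \<in> J" for f z
    using that unfolding smooth_on_def by (metis funpow_0)
  have D\<rho>: "(\<rho> has_real_derivative deriv \<rho> z) (at z)" if "z \<in> J" for z
    using dif[OF smooth(1) that] DERIV_deriv_iff_real_differentiable by blast
  have Dp: "(p has_real_derivative deriv p z) (at z)" if "z \<in> J" for z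
    using dif[OF smooth(2) that] DERIV_deriv_iff_real_differentiable by blast
  have Dq: "(q has_real_derivative deriv q z) (at z)" if "z \<in> J" for z
    using dif[OF smooth(3) that] DERIV_deriv_iff_real_differentiable by blast
  have c\<rho>: "continuous_on (J - {zS}) \<rho>"
    by (intro continuous_at_imp_continuous_on ballI DERIV_isCont[OF D\<rho>]) auto
  have cp: "continuous_on (J - {zS}) p"
    by (intro continuous_at_imp_continuous_on ballI DERIV_isCont[OF Dp]) auto
  have cq: "continuous_on (J - {zS}) q"
    by (intro continuous_at_imp_continuous_on ballI DERIV_isCont[OF Dq]) auto
  have Seq: "S = ((J - {zS}) \<inter> Dn -` (-{0})) \<inter> (\<lambda>z. (q z - \<Lambda>)/(z - zS)) -` {0<..}"
    by (auto simp: S_def good_pt_def Dn_def)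
  have oJ: "open (J - {zS})" using J(1) by auto
  have c1: "continuous_on (J - {zS}) Dn" unfolding Dn_def by (intro continuous_intros c\<rho> cp cq)
  have o1: "open ((J - {zS}) \<inter> Dn -` (-{0}))" by (rule continuous_open_preimage[OF c1 oJ]) auto
  have c2: "continuous_on ((J - {zS}) \<inter> Dn -` (-{0})) (\<lambda>z. (q z - \<Lambda>)/(z - zS))"
    by (intro continuous_intros continuous_on_subset[OF cq]) auto
  have openS: "open S" unfolding Seq by (rule continuous_open_preimage[OF c2 o1]) auto
  have zS0: "zS \<noteq> 0" using zS(1) by auto
  have S0: "0 \<in> S"
  proof -
    have "Dn 0 \<noteq> 0" using zS(2) unfolding Dn_def by (auto simp: algebra_simps)
    moreover have "(q 0 - \<Lambda>)/(0 - zS) > 0" using zS(1) by (simp add: divide_simps split: if_splits)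
    ultimately show ?thesis using J(3) zS0 unfolding S_def good_pt_def Dn_def by auto
  qed
  define I0 where "I0 = connected_component_set S 0"
  have I0: "open I0" "is_interval I0" "0 \<in> I0" "I0 \<subseteq> S"
    unfolding I0_def using openS S0
    by (auto simp: open_connected_component is_interval_connected_1 connected_component_subset)
  have maxI: "I \<subseteq> I0" if "open I \<and> is_interval I \<and> 0 \<in> I \<and> (\<forall>z\<in>I. good_pt J \<Lambda> \<rho> p q zS z)" for I
    unfolding I0_def using that
    by (intro connected_component_maximal) (auto simp: is_interval_connected_1 S_def)
  have goodS: "z \<in> J" "z \<noteq> zS" "Dn z \<noteq> 0" "(q z - \<Lambda>)/(z - zS) > 0" if "z \<in> S" for z
    using that by (auto simp: S_def good_pt_def Dn_def)
  have \<Phi>eq: "\<Phi> z = (q z - \<Lambda>)/(z - zS) * (1 / Dn z)" for z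
    by (simp add: \<Phi>_def Dn_def Phi_def)
  have \<Phi>nz: "\<Phi> z \<noteq> 0" "q z - \<Lambda> \<noteq> 0" if "z \<in> S" for z
    using goodS[OF that] unfolding \<Phi>eq by auto
  have D\<Phi>: "(\<Phi> has_real_derivative deriv \<Phi> z) (at z)" if "z \<in> S" for z
  proof -
    have "(\<lambda>z. (q z - \<Lambda>)/(z - zS) * (1 / Dn z)) differentiable (at z)"
      unfolding Dn_def using goodS[OF that] dif[OF smooth(1)] dif[OF smooth(2)] dif[OF smooth(3)]
      by (auto intro!: derivative_intros simp: Dn_def)
    then show ?thesis unfolding \<Phi>eq[abs_def] DERIV_deriv_iff_real_differentiable .
  qed
  have I0S: "z \<in> S" if "z \<in> I0" for z using I0(4) that by auto
  have c\<Phi>: "continuous_on I0 \<Phi>"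
    by (intro continuous_at_imp_continuous_on ballI DERIV_isCont[OF D\<Phi>] I0S)
  define fA where "fA = (\<lambda>z. (3*(z - zS) - 1) * \<Phi> z)"
  define A where "A = (\<lambda>z. ointegral 0 z fA)"
  define B where "B = (\<lambda>z. ointegral 0 z \<Phi>)"
  define a where "a = (\<lambda>z. exp (2 * A z))"
  define b where "b = (\<lambda>z. - exp (4 * B z))"
  define c where "c = (\<lambda>z. - (12 * (z - zS) / (q z - \<Lambda>)) * (\<Phi> z)\<^sup>2)"
  define Cp where "Cp = (\<lambda>z. -12*((\<Phi> z)^2/(q z - \<Lambda>) + 2*(z - zS)*\<Phi> z*deriv \<Phi> z/(q z - \<Lambda>) - (z - zS)*(\<Phi> z)^2*deriv q z/(q z - \<Lambda>)^2))"
  have met: "metric \<Lambda> \<rho> p q zS = dmet a b c"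
    by (auto simp: fun_eq_iff metric_def dmet_def comp3_def Let_def a_def b_def c_def A_def B_def fA_def \<Phi>_def)
  have cfA: "continuous_on I0 fA" unfolding fA_def by (intro continuous_intros c\<Phi>)
  have DA: "(A has_real_derivative fA z) (at z)" if "z \<in> I0" for z
    unfolding A_def by (rule ftc[OF I0(1,2,3) that cfA])
  have DB: "(B has_real_derivative \<Phi> z) (at z)" if "z \<in> I0" for z
    unfolding B_def by (rule ftc[OF I0(1,2,3) that c\<Phi>])
  have Da: "(a has_real_derivative 2 * fA z * a z) (at z)" if "z \<in> I0" for z
    unfolding a_def using DA[OF that] by (auto intro!: derivative_eq_intros)
  have Db: "(b has_real_derivative 4 * \<Phi> z * b z) (at z)" if "z \<in> I0" for z
    unfolding b_def using DB[OF that] by (auto intro!: derivative_eq_intros)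
  have Dc: "(c has_real_derivative Cp z) (at z)" if "z \<in> I0" for z
  proof -
    have K: "q z - \<Lambda> \<noteq> 0" using \<Phi>nz[OF I0S[OF that]] by simp
    have "((\<lambda>z. q z - \<Lambda>) has_real_derivative deriv q z) (at z)"
      using Dq[OF goodS(1)[OF I0S[OF that]]] by (auto intro!: derivative_eq_intros)
    from Dc_gen[where k="\<lambda>z. q z - \<Lambda>", OF K this D\<Phi>[OF I0S[OF that]]]
    show ?thesis unfolding c_def Cp_def .
  qed
  have DfA: "(fA has_real_derivative 3 * \<Phi> z + (3*(z - zS) - 1) * deriv \<Phi> z) (at z)" if "z \<in> I0" for z
    unfolding fA_def using D\<Phi>[OF I0S[OF that]] by (auto intro!: derivative_eq_intros)
  have nz: "a z \<noteq> 0 \<and> b z \<noteq> 0 \<and> c z \<noteq> 0" if "z \<in> I0" for z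
    using \<Phi>nz[OF I0S[OF that]] goodS(2)[OF I0S[OF that]] by (auto simp: a_def b_def c_def)
  have da: "deriv a z = 2 * fA z * a z" if "z \<in> I0" for z using DERIV_imp_deriv[OF Da[OF that]] .
  have db: "deriv b z = 4 * \<Phi> z * b z" if "z \<in> I0" for z using DERIV_imp_deriv[OF Db[OF that]] .
  have dc: "deriv c z = Cp z" if "z \<in> I0" for z using DERIV_imp_deriv[OF Dc[OF that]] .
  have h\<alpha>: "deriv a z/(2*a z) = fA z" if "z \<in> I0" for z using da[OF that] nz[OF that] by simp
  have h\<beta>: "deriv b z/(2*b z) = 2 * \<Phi> z" if "z \<in> I0" for z using db[OF that] nz[OF that] by simp
  have R00e: "R00 a b c z = - ((fA' * a z + fA z * (2 * fA z * a z)) / c z - fA z * a z * Cp z / (c z)^2)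
      + (2 * (2 * \<Phi> z) + Cp z / (2 * c z) - fA z) * (- (fA z * a z / c z))"
    if "z \<in> I0" "fA' = 3 * \<Phi> z + (3*(z - zS) - 1) * deriv \<Phi> z" for z fA'
  proof -
    have e1: "deriv (\<lambda>z. - (deriv a z / (2 * c z))) z = - ((fA' * a z + fA z * (2 * fA z * a z)) / c z - fA z * a z * Cp z / (c z)^2)"
    proof (rule deriv_local[OF I0(1) that(1)])
      show "- (deriv a w / (2 * c w)) = - (fA w * a w / c w)" if "w \<in> I0" for w
        using da[OF that] nz[OF that] by simp
      show "((\<lambda>w. - (fA w * a w / c w)) has_real_derivative - ((fA' * a z + fA z * (2 * fA z * a z)) / c z - fA z * a z * Cp z / (c z)^2)) (at z)"
        using DF_gen[OF _ DfA[OF that(1)] Da[OF that(1)] Dc[OF that(1)]] nz[OF that(1)] that(2) by simp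
    qed
    show ?thesis unfolding R00_def e1 h\<alpha>[OF that(1)] h\<beta>[OF that(1)] dc[OF that(1)]
      using da[OF that(1)] nz[OF that(1)] by simp
  qed
  have R11e: "R11 a b c z = - ((2 * deriv \<Phi> z * b z + 2 * \<Phi> z * (4 * \<Phi> z * b z)) / c z - 2 * \<Phi> z * b z * Cp z / (c z)^2)
      + (fA z + Cp z / (2 * c z)) * (- (2 * \<Phi> z * b z / c z))"
    if "z \<in> I0" for z
  proof -
    have D2: "((\<lambda>w. 2 * \<Phi> w) has_real_derivative 2 * deriv \<Phi> z) (at z)"
      using D\<Phi>[OF I0S[OF that]] by (auto intro!: derivative_eq_intros)
    have e1: "deriv (\<lambda>z. - (deriv b z / (2 * c z))) z = - ((2 * deriv \<Phi> z * b z + 2 * \<Phi> z * (4 * \<Phi> z * b z)) / c z - 2 * \<Phi> z * b z * Cp z / (c z)^2)"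
    proof (rule deriv_local[OF I0(1) that(1)])
      show "- (deriv b w / (2 * c w)) = - (2 * \<Phi> w * b w / c w)" if "w \<in> I0" for w
        using db[OF that] nz[OF that] by simp
      show "((\<lambda>w. - (2 * \<Phi> w * b w / c w)) has_real_derivative - ((2 * deriv \<Phi> z * b z + 2 * \<Phi> z * (4 * \<Phi> z * b z)) / c z - 2 * \<Phi> z * b z * Cp z / (c z)^2)) (at z)"
        using DF_gen[OF _ D2 Db[OF that(1)] Dc[OF that(1)]] nz[OF that(1)] by simp
    qed
    show ?thesis unfolding R11_def e1 h\<alpha>[OF that(1)] dc[OF that(1)]
      using db[OF that(1)] nz[OF that(1)] by simp
  qed
  have R33e: "R33 a b c z = - ((3 * \<Phi> z + (3*(z - zS) - 1) * deriv \<Phi> z) + 2 * (2 * deriv \<Phi> z))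
      + (fA z + 2 * (2 * \<Phi> z)) * (Cp z / (2 * c z)) - (fA z)^2 - 2 * (2 * \<Phi> z)^2"
    if "z \<in> I0" for z
  proof -
    have D2: "((\<lambda>w. 2 * \<Phi> w) has_real_derivative 2 * deriv \<Phi> z) (at z)"
      using D\<Phi>[OF I0S[OF that]] by (auto intro!: derivative_eq_intros)
    have e1: "deriv (\<lambda>z. deriv a z / (2 * a z)) z = 3 * \<Phi> z + (3*(z - zS) - 1) * deriv \<Phi> z"
      by (rule deriv_local[OF I0(1) that(1) h\<alpha> DfA[OF that]])
    have e2: "deriv (\<lambda>z. deriv b z / (2 * b z)) z = 2 * deriv \<Phi> z"
      by (rule deriv_local[OF I0(1) that(1) h\<beta> D2])
    show ?thesis unfolding R33_def e1 e2 h\<alpha>[OF that(1)] h\<beta>[OF that(1)] dc[OF that(1)] by simp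
  qed
  have U: "open I0" "\<And>z. z \<in> I0 \<Longrightarrow> a z \<noteq> 0 \<and> b z \<noteq> 0 \<and> c z \<noteq> 0" using I0(1) nz by auto
  have covx: "cov_div (metric \<Lambda> \<rho> p q zS) (emt \<rho> p q) n x =
      (if n = 3 then - deriv q (x 3) + fA (x 3) * (- q (x 3) - \<rho> (x 3)) + 2 * (2 * \<Phi> (x 3)) * (- q (x 3) - - p (x 3)) else 0)"
    if "x 3 \<in> I0" "n < 4" for x n
  proof -
    have nzx: "a (x 3) \<noteq> 0" "b (x 3) \<noteq> 0" "c (x 3) \<noteq> 0" using nz[OF that(1)] by auto
    have dq: "deriv (\<lambda>z. - q z) (x 3) = - deriv q (x 3)"
      using Dq[OF goodS(1)[OF I0S[OF that(1)]]] by (intro DERIV_imp_deriv) (auto intro!: derivative_eq_intros)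
    show ?thesis unfolding met emt_dmet cov_dmet[of a x b c, OF nzx that(2)] dq
      h\<alpha>[OF that(1)] h\<beta>[OF that(1)] by simp
  qed
  have W: "fA z * (- q z - \<rho> z) + 2 * (2 * \<Phi> z) * (- q z - - p z)
      = ((1 - 3 * (z - zS)) * (\<rho> z + q z) + 4 * (p z - q z)) * Phi \<Lambda> \<rho> p q zS z" for z
    unfolding fA_def \<Phi>_def by (simp add: algebra_simps)
  have cons: "(\<forall>n<4. cov_div (metric \<Lambda> \<rho> p q zS) (emt \<rho> p q) n x = 0)
           \<longleftrightarrow> deriv q (x 3) = ((1 - 3 * (x 3 - zS)) * (\<rho> (x 3) + q (x 3)) + 4 * (p (x 3) - q (x 3)))
                                 * Phi \<Lambda> \<rho> p q zS (x 3)" if "x 3 \<in> I0" for x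
    using W[of "x 3"] by (auto simp: all4 covx[where x=x, OF that])
  have ein: "\<forall>m<4. \<forall>n<4. einstein_lhs (metric \<Lambda> \<rho> p q zS) \<Lambda> m n x = emt \<rho> p q x m n"
    if H: "\<forall>x. x 3 \<in> I0 \<longrightarrow> (\<forall>n<4. cov_div (metric \<Lambda> \<rho> p q zS) (emt \<rho> p q) n x = 0)"
      and x: "x 3 \<in> I0" for x
  proof -
    define z where "z = x 3"
    have z: "z \<in> I0" using x z_def by simp
    have Q': "deriv q z = ((1 - 3 * (z - zS)) * (\<rho> z + q z) + 4 * (p z - q z)) * \<Phi> z"
      using cons[where x=x, OF x] H x unfolding z_def \<Phi>_def by auto
    note A = alg[where u="z - zS" and P="\<Phi> z" and P'="deriv \<Phi> z" and Q'="deriv q z" and K="q z - \<Lambda>"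
      and \<rho>="\<rho> z" and p="p z" and q="q z" and \<Lambda>=\<Lambda> and a="a z" and b="b z" and C="c z" and C'="Cp z"
      and fA="fA z" and fA'="3 * \<Phi> z + (3*(z - zS) - 1) * deriv \<Phi> z" and D="Dn z"]
    have A': "R00 a b c z / a z - Scal a b c z / 2 - \<Lambda> = \<rho> z"
       "R11 a b c z / b z - Scal a b c z / 2 - \<Lambda> = - p z"
       "R33 a b c z / c z - Scal a b c z / 2 - \<Lambda> = - q z"
      unfolding Scal_def R00e[OF z refl] R11e[OF z] R33e[OF z]
      by (rule A; (use goodS[OF I0S[OF z]] \<Phi>nz[OF I0S[OF z]] nz[OF z] Q' in \<open>simp_all add: Dn_def \<Phi>eq fA_def c_def Cp_def\<close>))+
    show ?thesis
    proof (intro allI impI)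
      fix m n :: nat assume mn: "m < 4" "n < 4"
      then have "m=0\<or>m=1\<or>m=2\<or>m=3" "n=0\<or>n=1\<or>n=2\<or>n=3" by auto
      then show "einstein_lhs (metric \<Lambda> \<rho> p q zS) \<Lambda> m n x = emt \<rho> p q x m n"
        using A' ein_dmet[where U=I0 and x=x and a=a and b=b and c=c and \<Lambda>=\<Lambda>, OF U(1) x U(2) mn]
        by (auto simp: z_def dmet_def comp3_def met emt_dmet)
    qed
  qed
  show ?thesis
    apply (rule exI[of _ I0])
    using I0(1,2,3) maxI cons ein I0S by (auto simp: S_def)
qed

end
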